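(* Assume $\mathbb F$ is algebraically closed with $\operatorname{char}\mathbb F=0$. Let $a,b,c\in\mathbb F$ and $d\in\mathbb N$ be such that none of $a+b+c+1$, $-a+b+c$, $a-b+c$, $a+b-c$ lies in $\{\tfrac d2-i\mid i=1,\dots,d\}$. Then $A$ (resp. $B$, resp. $C$) is diagonalizable on $R_d(a,b,c)$ if and only if $a$ (resp. $b$, resp. $c$) does not belong to $\{\tfrac{i-d-1}{2}\mid i=1,2,\dots,2d-1\}$.
   Context: The Racah algebra $\Re$ is the unital associative $\mathbb F$-algebra with generators $A,B,C,D$ and relations $[A,B]=[B,C]=[C,A]=2D$ together with the requirement that each of $\alpha:=[A,D]+AC-BA$, $\beta:=[B,D]+BA-CB$, $\gamma:=[C,D]+CB-AC$ is central in $\Re$; $\delta:=A+B+C$. For $a,b,c\in\mathbb F$ and $d\in\mathbb N$ set $\theta_i=(a+\tfrac d2-i)(a+\tfrac d2-i+1)$, $\theta_i^*=(b+\tfrac d2-i)(b+\tfrac d2-i+1)$, $\varphi_i=i(i-d-1)(a+b+c+\tfrac d2-i+2)(a+b-c+\tfrac d2-i+1)$. $R_d(a,b,c)$ denotes the $(d+1)$-dimensional $\Re$-module with a basis $v_0,\dots,v_d$ such that $Av_i=\theta_iv_i+v_{i+1}$ ($v_{d+1}=0$), $Bv_i=\theta_i^*v_i+\varphi_iv_{i-1}$ ($v_{-1}=0$), and $\alpha,\beta,\delta$ act as the scalars $(c-b)(c+b+1)(a-\tfrac d2)(a+\tfrac d2+1)$, $(a-c)(a+c+1)(b-\tfrac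 d2)(b+\tfrac d2+1)$, $\tfrac d2(\tfrac d2+1)+a(a+1)+b(b+1)+c(c+1)$ respectively (exists, unique up to isomorphism). *)

theory Defs
  imports "Jordan_Normal_Form.Matrix" "HOL-Computational_Algebra.Polynomial"
begin

definition alg_closed_field :: "'a::field itself \<Rightarrow> bool" where
  "alg_closed_field _ \<longleftrightarrow> (\<forall>p :: 'a poly. degree p \<noteq> 0 \<longrightarrow> (\<exists>x. poly p x = 0))"

definition diagonalizable_mat :: "'a::field mat \<Rightarrow> bool" where
  "diagonalizable_mat M \<longleftrightarrow> (\<exists>D. diagonal_mat D \<and> similar_mat M D)"

definition racah_theta :: "'a::field \<Rightarrow> nat \<Rightarrow> nat \<Rightarrow> 'a" where
  "racah_theta a d i = (a + of_nat d / 2 - of_nat i) * (a + of_nat d / 2 - of_nat i + 1)"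

definition racah_phi :: "'a::field \<Rightarrow> 'a \<Rightarrow> 'a \<Rightarrow> nat \<Rightarrow> nat \<Rightarrow> 'a" where
  "racah_phi a b c d i = of_nat i * (of_nat i - of_nat d - 1)
     * (a + b + c + of_nat d / 2 - of_nat i + 2) * (a + b - c + of_nat d / 2 - of_nat i + 1)"

definition racah_delta :: "'a::field \<Rightarrow> 'a \<Rightarrow> 'a \<Rightarrow> nat \<Rightarrow> 'a" where
  "racah_delta a b c d = (of_nat d / 2) * (of_nat d / 2 + 1) + a * (a + 1) + b * (b + 1) + c * (c + 1)"

text \<open>Matrices (w.r.t. the basis v_0..v_d; column j = image of v_j) of A, B, C on R_d(a,b,c).
  C acts as delta - A - B since delta = A + B + C acts as a scalar.\<close>
definition racah_A :: "'a::field \<Rightarrow> 'a \<Rightarrow> 'a \<Rightarrow> nat \<Rightarrow> 'a mat" where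
  "racah_A a b c d = mat (Suc d) (Suc d)
     (\<lambda>(i, j). if i = j then racah_theta a d j else if i = j + 1 then 1 else 0)"

definition racah_B :: "'a::field \<Rightarrow> 'a \<Rightarrow> 'a \<Rightarrow> nat \<Rightarrow> 'a mat" where
  "racah_B a b c d = mat (Suc d) (Suc d)
     (\<lambda>(i, j). if i = j then racah_theta b d j else if i + 1 = j then racah_phi a b c d j else 0)"

definition racah_C :: "'a::field \<Rightarrow> 'a \<Rightarrow> 'a \<Rightarrow> nat \<Rightarrow> 'a mat" where
  "racah_C a b c d = racah_delta a b c d \<cdot>\<^sub>m 1\<^sub>m (Suc d) - racah_A a b c d - racah_B a b c d"

end

theory Submission
  imports Defs "Jordan_Normal_Form.Char_Poly"
begin

lemma sum_tri:
  fixes f :: "nat \<Rightarrow> 'a::comm_monoid_add"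
  assumes r: "r < n" and z: "\<And>k. k < n \<Longrightarrow> k \<noteq> r \<Longrightarrow> Suc k \<noteq> r \<Longrightarrow> k \<noteq> Suc r \<Longrightarrow> f k = 0"
  shows "(\<Sum>k<n. f k) = f r + (if 0 < r then f (r - 1) else 0) + (if Suc r < n then f (Suc r) else 0)"
proof -
  let ?S = "{k. k < n \<and> (k = r \<or> Suc k = r \<or> k = Suc r)}"
  have "(\<Sum>k<n. f k) = (\<Sum>k\<in>?S. f k)"
    by (rule sum.mono_neutral_right) (use z in auto)
  also have "\<dots> = f r + (if 0 < r then f (r - 1) else 0) + (if Suc r < n then f (Suc r) else 0)"
  proof (cases r)
    case 0
    show ?thesis
    proof (cases "Suc r < n")
      case True
      have "?S = {0, 1}" using True 0 by (simp add: set_eq_iff) arith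
      then show ?thesis using 0 True by simp
    next
      case False
      have "?S = {0}" using False 0 r by (simp add: set_eq_iff) arith
      then show ?thesis using 0 False by simp
    qed
  next
    case (Suc m)
    show ?thesis
    proof (cases "Suc r < n")
      case True
      have "?S = {m, Suc m, Suc (Suc m)}" using True Suc r by (simp add: set_eq_iff) arith
      then show ?thesis using Suc True by (simp add: add_ac)
    next
      case False
      have "?S = {m, Suc m}" using False Suc r by (simp add: set_eq_iff) arith
      then show ?thesis using Suc False by (simp add: add_ac)
    qed
  qed
  finally show ?thesis .
qed


definition lbidiag :: "nat \<Rightarrow> 'a::field mat \<Rightarrow> bool" where
  "lbidiag n M \<longleftrightarrow> M \<in> carrier_mat n n \<and> (\<forall>i<n. \<forall>j<n. i \<noteq> j \<and> i \<noteq> Suc j \<longrightarrow> M $$ (i,j) = 0)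
     \<and> (\<forall>j. Suc j < n \<longrightarrow> M $$ (Suc j, j) \<noteq> 0)"

lemma mult_lbidiag_entry:
  assumes M: "M \<in> carrier_mat n n" and z: "\<forall>i<n. \<forall>j<n. i \<noteq> j \<and> i \<noteq> Suc j \<longrightarrow> M $$ (i,j) = 0"
    and X: "X \<in> carrier_mat n m" and r: "r < n" and k: "k < m"
  shows "(M * X) $$ (r,k) = M $$ (r,r) * X $$ (r,k) + (if 0 < r then M $$ (r, r-1) * X $$ (r-1,k) else 0)"
proof -
  have "(M * X) $$ (r,k) = (\<Sum>j<n. M $$ (r,j) * X $$ (j,k))"
    using M X r k by (simp add: scalar_prod_def atLeast0LessThan)
  also have "\<dots> = M $$ (r,r) * X $$ (r,k) + (if 0 < r then M $$ (r, r-1) * X $$ (r-1,k) else 0)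
      + (if Suc r < n then M $$ (r, Suc r) * X $$ (Suc r,k) else 0)"
    by (rule sum_tri[OF r]) (use z r in auto)
  also have "\<dots> = M $$ (r,r) * X $$ (r,k) + (if 0 < r then M $$ (r, r-1) * X $$ (r-1,k) else 0)"
    using z r by auto
  finally show ?thesis .
qed


lemma similar_by_intertwine:
  fixes M N P :: "'a::field mat"
  assumes M: "M \<in> carrier_mat n n" and N: "N \<in> carrier_mat n n" and P: "P \<in> carrier_mat n n"
    and dP: "det P \<noteq> 0" and MP: "M * P = P * N"
  shows "similar_mat M N"
proof -
  let ?R = "ring_mat TYPE('a) n undefined"
  from det_non_zero_imp_unit[OF P dP] have "P \<in> Units ?R" .
  then obtain Q where Q: "Q \<in> carrier_mat n n" and PQ: "P * Q = 1\<^sub>m n" and QP: "Q * P = 1\<^sub>m n"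
    unfolding Units_def ring_mat_def by auto
  have "M = M * (P * Q)" using M by (simp add: PQ)
  also have "\<dots> = (M * P) * Q" using M P Q by (simp add: assoc_mult_mat)
  also have "\<dots> = P * N * Q" by (simp add: MP)
  finally show ?thesis by (intro similar_matI[OF _ PQ QP]) (use M N P Q in auto)
qed


lemma prod_list_all1: "\<forall>x\<in>set xs. x = (1::'a::monoid_mult) \<Longrightarrow> prod_list xs = 1"
  by (induction xs) auto

fun evc :: "'a::field mat \<Rightarrow> nat \<Rightarrow> nat \<Rightarrow> 'a" where
  "evc M k 0 = (if k = 0 then 1 else 0)"
| "evc M k (Suc r) = (if Suc r < k then 0 else if Suc r = k then 1
      else M $$ (Suc r, r) * evc M k r / (M $$ (k,k) - M $$ (Suc r, Suc r)))"

lemma evc_lt: "r < k \<Longrightarrow> evc M k r = 0"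
  by (cases r) auto

lemma evc_eq: "evc M k k = 1"
  by (cases k) auto

lemma lbidiag_distinct_diag:
  assumes L: "lbidiag n M" and inj: "inj_on (\<lambda>i. M $$ (i,i)) {..<n}"
  shows "diagonalizable_mat M"
proof -
  have M: "M \<in> carrier_mat n n" and z: "\<forall>i<n. \<forall>j<n. i \<noteq> j \<and> i \<noteq> Suc j \<longrightarrow> M $$ (i,j) = 0"
    using L unfolding lbidiag_def by auto
  define P where "P = mat n n (\<lambda>(r,k). evc M k r)"
  define D where "D = mat n n (\<lambda>(i,j). if i = j then M $$ (i,i) else (0::'a))"
  have P: "P \<in> carrier_mat n n" and D: "D \<in> carrier_mat n n" unfolding P_def D_def by auto
  have "det P = prod_list (diag_mat P)"
    by (rule det_lower_triangular[OF _ P]) (simp add: P_def evc_lt)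
  also have "\<dots> = 1"
  proof -
    have "\<forall>x\<in>set (diag_mat P). x = 1" unfolding diag_mat_def P_def by (auto simp: evc_eq)
    then show ?thesis by (rule prod_list_all1)
  qed
  finally have dP: "det P \<noteq> 0" by simp
  have "M * P = P * D"
  proof (rule eq_matI)
    fix r k assume r: "r < dim_row (P * D)" and k: "k < dim_col (P * D)"
    then have r: "r < n" and k: "k < n" using P D by auto
    have lhs: "(M * P) $$ (r,k) = M $$ (r,r) * evc M k r + (if 0 < r then M $$ (r, r-1) * evc M k (r-1) else 0)"
      using mult_lbidiag_entry[OF M z P r k] r k by (simp add: P_def)
    have rhs: "(P * D) $$ (r,k) = evc M k r * M $$ (k,k)"
    proof -
      have "(P * D) $$ (r,k) = (\<Sum>j<n. P $$ (r,j) * D $$ (j,k))"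
        using P D r k by (simp add: scalar_prod_def atLeast0LessThan)
      also have "\<dots> = (\<Sum>j<n. if j = k then P $$ (r,k) * D $$ (k,k) else 0)"
        by (rule sum.cong) (use k in \<open>auto simp: D_def\<close>)
      also have "\<dots> = P $$ (r,k) * D $$ (k,k)" using k by simp
      finally show ?thesis using r k by (simp add: P_def D_def)
    qed
    show "(M * P) $$ (r,k) = (P * D) $$ (r,k)"
    proof (cases "r < k")
      case True
      then show ?thesis using lhs rhs by (simp add: evc_lt)
    next
      case False
      show ?thesis
      proof (cases "r = k")
        case True
        then show ?thesis using lhs rhs by (simp add: evc_eq evc_lt)
      next
        case False
        with \<open>\<not> r < k\<close> obtain q where q: "r = Suc q" and kq: "k \<le> q" by (cases r) auto
        have ne: "M $$ (k,k) - M $$ (Suc q, Suc q) \<noteq> 0"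
          using inj kq q r k unfolding inj_on_def by (metis Suc_le_lessD lessThan_iff nat_neq_iff right_minus_eq)
        have "evc M k (Suc q) = M $$ (Suc q, q) * evc M k q / (M $$ (k,k) - M $$ (Suc q, Suc q))"
          using kq by simp
        then have e_eq: "M $$ (Suc q, q) * evc M k q = M $$ (k,k) * evc M k (Suc q) - M $$ (Suc q, Suc q) * evc M k (Suc q)"
          using ne by (simp add: field_simps)
        have l2: "(M * P) $$ (r,k) = M $$ (Suc q, Suc q) * evc M k (Suc q) + M $$ (Suc q, q) * evc M k q"
          using lhs q by simp
        have "(M * P) $$ (r,k) = evc M k (Suc q) * M $$ (k,k)"
          unfolding l2 e_eq by (simp add: algebra_simps)
        then show ?thesis using rhs q by simp
      qed
    qed
  qed (use P D M in auto)
  have "similar_mat M D" by (rule similar_by_intertwine[OF M D P dP]) fact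
  moreover have "diagonal_mat D" unfolding diagonal_mat_def D_def by auto
  ultimately show ?thesis unfolding diagonalizable_mat_def by auto
qed




fun pm :: "'a::field mat \<Rightarrow> nat \<Rightarrow> 'a list \<Rightarrow> 'a mat" where
  "pm M n [] = 1\<^sub>m n"
| "pm M n (x # xs) = (M - x \<cdot>\<^sub>m 1\<^sub>m n) * pm M n xs"

lemma pm_carrier: "pm M n xs \<in> carrier_mat n n"
  by (induction xs) auto

lemma pm_intertwine:
  assumes M: "M \<in> carrier_mat n n" and D: "D \<in> carrier_mat n n" and P: "P \<in> carrier_mat n n"
    and MP: "M * P = P * D"
  shows "pm M n xs * P = P * pm D n xs"
proof (induction xs)
  case Nil
  then show ?case using P by simp
next
  case (Cons x xs)
  have I: "x \<cdot>\<^sub>m 1\<^sub>m n \<in> carrier_mat n n" by simp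
  have pM: "pm M n xs \<in> carrier_mat n n" and pD: "pm D n xs \<in> carrier_mat n n" by (rule pm_carrier)+
  have sh: "(M - x \<cdot>\<^sub>m 1\<^sub>m n) * P = P * (D - x \<cdot>\<^sub>m 1\<^sub>m n)"
  proof -
    have 1: "(M - x \<cdot>\<^sub>m 1\<^sub>m n) * P = M * P - (x \<cdot>\<^sub>m 1\<^sub>m n) * P"
      by (rule minus_mult_distrib_mat[OF M I P])
    have 2: "(x \<cdot>\<^sub>m 1\<^sub>m n) * P = x \<cdot>\<^sub>m P"
      using mult_smult_assoc_mat[OF one_carrier_mat P] P by simp
    have 3: "P * (D - x \<cdot>\<^sub>m 1\<^sub>m n) = P * D - P * (x \<cdot>\<^sub>m 1\<^sub>m n)"
      by (rule mult_minus_distrib_mat[OF P D I])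
    have 4: "P * (x \<cdot>\<^sub>m 1\<^sub>m n) = x \<cdot>\<^sub>m P"
      using mult_smult_distrib[OF P one_carrier_mat] P by simp
    show ?thesis unfolding 1 2 3 4 MP ..
  qed
  have MI: "(M - x \<cdot>\<^sub>m 1\<^sub>m n) \<in> carrier_mat n n" by (rule minus_carrier_mat) simp
  have DI: "(D - x \<cdot>\<^sub>m 1\<^sub>m n) \<in> carrier_mat n n" by (rule minus_carrier_mat) simp
  have "pm M n (x # xs) * P = (M - x \<cdot>\<^sub>m 1\<^sub>m n) * (pm M n xs * P)"
    using assoc_mult_mat[OF MI pM P] by simp
  also have "\<dots> = (M - x \<cdot>\<^sub>m 1\<^sub>m n) * (P * pm D n xs)" by (simp add: Cons.IH)
  also have "\<dots> = ((M - x \<cdot>\<^sub>m 1\<^sub>m n) * P) * pm D n xs"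
    by (rule assoc_mult_mat[OF MI P pD, symmetric])
  also have "\<dots> = P * ((D - x \<cdot>\<^sub>m 1\<^sub>m n) * pm D n xs)"
    unfolding sh by (rule assoc_mult_mat[OF P DI pD])
  finally show ?case by simp
qed

lemma pm_diag:
  assumes D: "D \<in> carrier_mat n n" and dD: "diagonal_mat D"
  shows "pm D n xs = mat n n (\<lambda>(i,j). if i = j then prod_list (map (\<lambda>x. D $$ (i,i) - x) xs) else 0)"
proof (induction xs)
  case Nil
  then show ?case by (rule eq_matI) auto
next
  case (Cons x xs)
  let ?Y = "mat n n (\<lambda>(i,j). if i = j then prod_list (map (\<lambda>x. D $$ (i,i) - x) xs) else 0)"
  show ?case
  proof (rule eq_matI)
    fix i j assume i: "i < dim_row (mat n n (\<lambda>(i,j). if i = j then prod_list (map (\<lambda>x. D $$ (i,i) - x) (x # xs)) else 0))"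
      and j: "j < dim_col (mat n n (\<lambda>(i,j). if i = j then prod_list (map (\<lambda>x. D $$ (i,i) - x) (x # xs)) else 0))"
    then have i: "i < n" and j: "j < n" by auto
    have e: "\<And>k. k < n \<Longrightarrow> (D - x \<cdot>\<^sub>m 1\<^sub>m n) $$ (i,k) = (if k = i then D $$ (i,i) - x else 0)"
      using D dD i unfolding diagonal_mat_def by auto
    have "pm D n (x # xs) $$ (i,j) = ((D - x \<cdot>\<^sub>m 1\<^sub>m n) * ?Y) $$ (i,j)" using Cons.IH by simp
    also have "\<dots> = (\<Sum>k<n. (D - x \<cdot>\<^sub>m 1\<^sub>m n) $$ (i,k) * ?Y $$ (k,j))"
      using D i j by (simp add: scalar_prod_def atLeast0LessThan)
    also have "\<dots> = (\<Sum>k<n. if k = i then (D $$ (i,i) - x) * ?Y $$ (i,j) else 0)"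
      by (rule sum.cong) (auto simp: e)
    also have "\<dots> = (D $$ (i,i) - x) * ?Y $$ (i,j)" using i by simp
    finally show "pm D n (x # xs) $$ (i,j) = mat n n (\<lambda>(i,j). if i = j then prod_list (map (\<lambda>x. D $$ (i,i) - x) (x # xs)) else 0) $$ (i,j)"
      using i j by simp
  qed (use D pm_carrier[of D n xs] in auto)
qed

lemma pm_col0:
  assumes L: "lbidiag n M"
  shows "length xs < n \<Longrightarrow> pm M n xs $$ (length xs, 0) = prod_list (map (\<lambda>k. M $$ (Suc k, k)) [0..<length xs])
     \<and> (\<forall>i<n. length xs < i \<longrightarrow> pm M n xs $$ (i, 0) = 0)"
proof (induction xs)
  case Nil
  then show ?case by auto
next
  case (Cons x xs)
  have M: "M \<in> carrier_mat n n" and z: "\<forall>i<n. \<forall>j<n. i \<noteq> j \<and> i \<noteq> Suc j \<longrightarrow> M $$ (i,j) = 0"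
    using L unfolding lbidiag_def by auto
  let ?M = "M - x \<cdot>\<^sub>m 1\<^sub>m n"
  have M': "?M \<in> carrier_mat n n" by (rule minus_carrier_mat) simp
  have z': "\<forall>i<n. \<forall>j<n. i \<noteq> j \<and> i \<noteq> Suc j \<longrightarrow> ?M $$ (i,j) = 0" using z M by auto
  have IH: "pm M n xs $$ (length xs, 0) = prod_list (map (\<lambda>k. M $$ (Suc k, k)) [0..<length xs])"
    "\<forall>i<n. length xs < i \<longrightarrow> pm M n xs $$ (i, 0) = 0" using Cons by auto
  have n0: "0 < n" using Cons.prems by simp
  have ent: "\<And>i. i < n \<Longrightarrow> pm M n (x # xs) $$ (i,0) = ?M $$ (i,i) * pm M n xs $$ (i,0)
      + (if 0 < i then ?M $$ (i, i-1) * pm M n xs $$ (i-1,0) else 0)"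
    using mult_lbidiag_entry[OF M' z' pm_carrier _ n0] by simp
  have A: "pm M n (x # xs) $$ (length (x # xs), 0) = prod_list (map (\<lambda>k. M $$ (Suc k, k)) [0..<length (x # xs)])"
  proof -
    have l: "length (x # xs) < n" using Cons.prems .
    have "pm M n (x # xs) $$ (length (x # xs), 0) = ?M $$ (Suc (length xs), length xs) * pm M n xs $$ (length xs, 0)"
      using ent[OF l] IH(2) l by simp
    also have "?M $$ (Suc (length xs), length xs) = M $$ (Suc (length xs), length xs)" using M l by simp
    finally show ?thesis using IH(1) by (simp add: mult.commute)
  qed
  have B: "\<forall>i<n. length (x # xs) < i \<longrightarrow> pm M n (x # xs) $$ (i, 0) = 0"
  proof (intro allI impI)
    fix i assume i: "i < n" "length (x # xs) < i"
    then show "pm M n (x # xs) $$ (i, 0) = 0" using ent[OF i(1)] IH(2) by auto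
  qed
  show ?case using A B by blast
qed



lemma lbidiag_diag_imp_distinct:
  assumes L: "lbidiag n M" and dg: "diagonalizable_mat M"
  shows "inj_on (\<lambda>i. M $$ (i,i)) {..<n}"
proof (rule ccontr)
  assume ninj: "\<not> inj_on (\<lambda>i. M $$ (i,i)) {..<n}"
  have M: "M \<in> carrier_mat n n" and z: "\<forall>i<n. \<forall>j<n. i \<noteq> j \<and> i \<noteq> Suc j \<longrightarrow> M $$ (i,j) = 0"
    and nz: "\<forall>j. Suc j < n \<longrightarrow> M $$ (Suc j, j) \<noteq> 0"
    using L unfolding lbidiag_def by auto
  obtain D where dD: "diagonal_mat D" and sim: "similar_mat M D"
    using dg unfolding diagonalizable_mat_def by auto
  from similar_matD[OF sim] obtain m P Q where
    cars: "{M, D, P, Q} \<subseteq> carrier_mat m m" and PQ: "P * Q = 1\<^sub>m m" and QP: "Q * P = 1\<^sub>m m"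
    and MPDQ: "M = P * D * Q" by blast
  have mn: "m = n" using cars M by auto
  have D: "D \<in> carrier_mat n n" and P: "P \<in> carrier_mat n n" and Q: "Q \<in> carrier_mat n n"
    using cars mn by auto
  have MP: "M * P = P * D"
  proof -
    have "M * P = P * D * Q * P" using MPDQ by simp
    also have "\<dots> = P * D * (Q * P)" using P D Q by (simp add: assoc_mult_mat[of _ n n _ n _ n])
    also have "\<dots> = P * D" using QP mn P D by simp
    finally show ?thesis .
  qed
  have cpM: "char_poly M = (\<Prod>a\<leftarrow>diag_mat M. [:- a, 1:])"
  proof -
    have ut: "upper_triangular (transpose_mat M)"
      unfolding upper_triangular_def using z M by auto
    have "char_poly (transpose_mat M) = (\<Prod>a\<leftarrow>diag_mat (transpose_mat M). [:- a, 1:])"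
      by (rule char_poly_upper_triangular[OF _ ut]) (use M in simp)
    moreover have "diag_mat (transpose_mat M) = diag_mat M" unfolding diag_mat_def using M by auto
    ultimately show ?thesis using M by simp
  qed
  have cpD: "char_poly D = (\<Prod>a\<leftarrow>diag_mat D. [:- a, 1:])"
  proof -
    have ut: "upper_triangular D" using dD D unfolding upper_triangular_def diagonal_mat_def by auto
    show ?thesis by (rule char_poly_upper_triangular[OF D ut])
  qed
  have cpeq: "char_poly M = char_poly D" by (rule char_poly_similar[OF sim])
  define xs where "xs = remdups (diag_mat M)"
  have Dxs: "D $$ (k,k) \<in> set xs" if k: "k < n" for k
  proof -
    have "poly (char_poly D) (D $$ (k,k)) = 0"
      unfolding cpD poly_prod_list using k D by (auto simp: diag_mat_def prod_list_zero_iff)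
    then have "poly (\<Prod>a\<leftarrow>diag_mat M. [:- a, 1:]) (D $$ (k,k)) = 0" using cpeq cpM by simp
    then show ?thesis unfolding xs_def poly_prod_list by (auto simp: prod_list_zero_iff)
  qed
  have len: "length xs < n"
  proof -
    have "\<not> distinct (diag_mat M)" using ninj M
      unfolding diag_mat_def by (auto simp: distinct_map atLeast0LessThan)
    then have "card (set (diag_mat M)) \<noteq> length (diag_mat M)" using card_distinct by blast
    moreover have "card (set (diag_mat M)) \<le> length (diag_mat M)" by (rule card_length)
    ultimately show ?thesis unfolding xs_def using M by (simp add: length_remdups_card_conv diag_mat_def)
  qed
  have pD0: "pm D n xs = 0\<^sub>m n n"
  proof -
    have "pm D n xs = mat n n (\<lambda>(i,j). if i = j then prod_list (map (\<lambda>x. D $$ (i,i) - x) xs) else 0)"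
      by (rule pm_diag[OF D dD])
    also have "\<dots> = 0\<^sub>m n n"
    proof (rule eq_matI)
      fix i j assume "i < dim_row (0\<^sub>m n n :: 'a mat)" "j < dim_col (0\<^sub>m n n :: 'a mat)"
      then have i: "i < n" and j: "j < n" by auto
      have "prod_list (map (\<lambda>x. D $$ (i,i) - x) xs) = 0"
        using Dxs[OF i] by (auto simp: prod_list_zero_iff)
      then show "mat n n (\<lambda>(i,j). if i = j then prod_list (map (\<lambda>x. D $$ (i,i) - x) xs) else 0) $$ (i,j) = 0\<^sub>m n n $$ (i,j)"
        using i j by auto
    qed auto
    finally show ?thesis .
  qed
  have pM0: "pm M n xs = 0\<^sub>m n n"
  proof -
    have pM: "pm M n xs \<in> carrier_mat n n" by (rule pm_carrier)
    have "pm M n xs = pm M n xs * (P * Q)" using pM PQ mn by simp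
    also have "\<dots> = (pm M n xs * P) * Q" using pM P Q by (simp add: assoc_mult_mat[of _ n n _ n _ n])
    also have "\<dots> = P * 0\<^sub>m n n * Q" unfolding pm_intertwine[OF M D P MP] pD0 ..
    also have "\<dots> = 0\<^sub>m n n" using P Q by simp
    finally show ?thesis .
  qed
  have "pm M n xs $$ (length xs, 0) = prod_list (map (\<lambda>k. M $$ (Suc k, k)) [0..<length xs])"
    using pm_col0[OF L len] by blast
  moreover have "prod_list (map (\<lambda>k. M $$ (Suc k, k)) [0..<length xs]) \<noteq> 0"
    using nz len by (auto simp: prod_list_zero_iff)
  moreover have "pm M n xs $$ (length xs, 0) = 0" using pM0 len by simp
  ultimately show False by simp
qed

lemma lbidiag_diagonalizable_iff:
  assumes L: "lbidiag n M"
  shows "diagonalizable_mat M \<longleftrightarrow> inj_on (\<lambda>i. M $$ (i,i)) {..<n}"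
  using lbidiag_diag_imp_distinct[OF L] lbidiag_distinct_diag[OF L] by blast



lemma theta_diff:
  fixes x :: "'a::field_char_0"
  shows "racah_theta x d i - racah_theta x d j = (of_nat j - of_nat i) * (2 * x + of_nat d + 1 - of_nat i - of_nat j)"
  unfolding racah_theta_def by (simp add: field_simps)

lemma inj_theta_iff:
  fixes x :: "'a::field_char_0"
  shows "inj_on (\<lambda>i. racah_theta x d i) {..<Suc d} \<longleftrightarrow>
    x \<notin> {(of_nat i - of_nat d - 1) / 2 | i. i \<in> {1..2*d-1}}"
proof
  assume inj: "inj_on (\<lambda>i. racah_theta x d i) {..<Suc d}"
  show "x \<notin> {(of_nat i - of_nat d - 1) / 2 | i. i \<in> {1..2*d-1}}"
  proof
    assume "x \<in> {(of_nat i - of_nat d - 1) / 2 | i. i \<in> {1..2*d-1}}"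
    then obtain k where k: "k \<in> {1..2*d-1}" and xk: "x = (of_nat k - of_nat d - 1) / 2" by auto
    obtain i j where ij: "i \<noteq> j" "i \<le> d" "j \<le> d" "i + j = k"
    proof (cases "k \<le> d")
      case True
      then show ?thesis using k by (intro that[of 0 k]) auto
    next
      case False
      then show ?thesis using k by (intro that[of "k - d" d]) auto
    qed
    have "2 * x + of_nat d + 1 - of_nat i - of_nat j = 0"
      using xk ij(4)[symmetric] by (simp add: field_simps)
    then have "racah_theta x d i = racah_theta x d j"
      using theta_diff[of x d i j] by simp
    with inj ij show False unfolding inj_on_def by auto
  qed
next
  assume nx: "x \<notin> {(of_nat i - of_nat d - 1) / 2 | i. i \<in> {1..2*d-1}}"
  show "inj_on (\<lambda>i. racah_theta x d i) {..<Suc d}"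
  proof (rule inj_onI)
    fix i j assume i: "i \<in> {..<Suc d}" and j: "j \<in> {..<Suc d}" and eq: "racah_theta x d i = racah_theta x d j"
    show "i = j"
    proof (rule ccontr)
      assume ij: "i \<noteq> j"
      have "(of_nat j - of_nat i :: 'a) \<noteq> 0" using ij by simp
      then have "2 * x + of_nat d + 1 - of_nat i - of_nat j = 0"
        using theta_diff[of x d i j] eq by simp
      then have "x = (of_nat (i + j) - of_nat d - 1) / 2" by (simp add: field_simps)
      moreover have "i + j \<in> {1..2*d-1}" using i j ij by auto
      ultimately show False using nx by blast
    qed
  qed
qed

lemma racah_A_lbidiag: "lbidiag (Suc d) (racah_A a b c d)"
  unfolding lbidiag_def racah_A_def by auto

lemma racah_A_diag: "i < Suc d \<Longrightarrow> racah_A a b c d $$ (i,i) = racah_theta a d i"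
  unfolding racah_A_def by auto

lemma diagonalizable_transpose:
  assumes "diagonalizable_mat M" shows "diagonalizable_mat (transpose_mat M)"
proof -
  obtain D where dD: "diagonal_mat D" and sim: "similar_mat M D"
    using assms unfolding diagonalizable_mat_def by auto
  from similar_matD[OF sim] obtain n P Q where
    cars: "{M, D, P, Q} \<subseteq> carrier_mat n n" and PQ: "P * Q = 1\<^sub>m n" and QP: "Q * P = 1\<^sub>m n"
    and MPDQ: "M = P * D * Q" by blast
  have M: "M \<in> carrier_mat n n" and D: "D \<in> carrier_mat n n" and P: "P \<in> carrier_mat n n" and Q: "Q \<in> carrier_mat n n"
    using cars by auto
  have "transpose_mat M = transpose_mat (P * D * Q)" using MPDQ by simp
  also have "\<dots> = transpose_mat Q * transpose_mat (P * D)"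
    by (rule transpose_mult) (use P D Q in auto)
  also have "transpose_mat (P * D) = transpose_mat D * transpose_mat P"
    by (rule transpose_mult) (use P D in auto)
  finally have eq: "transpose_mat M = transpose_mat Q * transpose_mat D * transpose_mat P"
    using P D Q by (simp add: assoc_mult_mat[of _ n n _ n _ n])
  have 1: "transpose_mat Q * transpose_mat P = 1\<^sub>m n"
    using transpose_mult[of P n n Q n] P Q PQ by simp
  have 2: "transpose_mat P * transpose_mat Q = 1\<^sub>m n"
    using transpose_mult[of Q n n P n] P Q QP by simp
  have "similar_mat (transpose_mat M) (transpose_mat D)"
    by (rule similar_matI[OF _ 1 2 eq]) (use M D P Q in auto)
  moreover have "diagonal_mat (transpose_mat D)" using dD unfolding diagonal_mat_def by auto
  ultimately show ?thesis unfolding diagonalizable_mat_def by auto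
qed

lemma diagonalizable_transpose_iff: "diagonalizable_mat (transpose_mat M) \<longleftrightarrow> diagonalizable_mat M"
  using diagonalizable_transpose[of M] diagonalizable_transpose[of "transpose_mat M"] by auto

lemma diagonalizable_similar:
  assumes "similar_mat M N" shows "diagonalizable_mat M \<longleftrightarrow> diagonalizable_mat N"
  using assms similar_mat_trans similar_mat_sym unfolding diagonalizable_mat_def by blast

lemma phi_nonzero:
  fixes a b c :: "'a::field_char_0"
  assumes h: "\<forall>x \<in> {a + b + c + 1, - a + b + c, a - b + c, a + b - c}.
           x \<notin> {of_nat d / 2 - of_nat i | i. i \<in> {1..d}}"
    and j: "1 \<le> j" "j \<le> d"
  shows "racah_phi a b c d j \<noteq> 0"
proof -
  have w: "d + 1 - j \<in> {1..d}" using j by auto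
  have cj: "(of_nat (d + 1 - j) :: 'a) = of_nat d + 1 - of_nat j" using j by (simp add: of_nat_diff)
  have f1: "(of_nat j :: 'a) \<noteq> 0" using j by simp
  have f2: "(of_nat j - of_nat d - 1 :: 'a) \<noteq> 0"
  proof
    assume "(of_nat j - of_nat d - 1 :: 'a) = 0"
    then have "(of_nat j :: 'a) = of_nat (d + 1)" by (simp add: algebra_simps)
    then have "j = d + 1" using of_nat_eq_iff by blast
    then show False using j by simp
  qed
  have f3: "a + b + c + of_nat d / 2 - of_nat j + 2 \<noteq> 0"
  proof
    assume "a + b + c + of_nat d / 2 - of_nat j + 2 = 0"
    then have "a + b + c + 1 = of_nat d / 2 - of_nat (d + 1 - j)" unfolding cj by (simp add: field_simps)
    then show False using h w by blast
  qed
  have f4: "a + b - c + of_nat d / 2 - of_nat j + 1 \<noteq> 0"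
  proof
    assume "a + b - c + of_nat d / 2 - of_nat j + 1 = 0"
    then have "a + b - c = of_nat d / 2 - of_nat (d + 1 - j)" unfolding cj by (simp add: field_simps)
    then show False using h w by blast
  qed
  show ?thesis unfolding racah_phi_def using f1 f2 f3 f4 by simp
qed

lemma racah_B_lbidiag:
  fixes a b c :: "'a::field_char_0"
  assumes h: "\<forall>x \<in> {a + b + c + 1, - a + b + c, a - b + c, a + b - c}.
           x \<notin> {of_nat d / 2 - of_nat i | i. i \<in> {1..d}}"
  shows "lbidiag (Suc d) (transpose_mat (racah_B a b c d))"
  unfolding lbidiag_def racah_B_def using phi_nonzero[OF h] by auto

lemma racah_B_diag: "i < Suc d \<Longrightarrow> transpose_mat (racah_B a b c d) $$ (i,i) = racah_theta b d i"
  unfolding racah_B_def by auto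



definition gC :: "'a::field \<Rightarrow> 'a \<Rightarrow> 'a \<Rightarrow> nat \<Rightarrow> nat \<Rightarrow> 'a" where
  "gC a b c d k = (of_nat d - of_nat k) * (a + b + c + of_nat d / 2 + 1 - of_nat k)"

definition pC :: "'a::field \<Rightarrow> 'a \<Rightarrow> 'a \<Rightarrow> nat \<Rightarrow> nat \<Rightarrow> nat \<Rightarrow> 'a" where
  "pC a b c d j i = of_nat (i choose j) * (\<Prod>k = j..<i. gC a b c d k)"

lemma bin1: "Suc r * (i choose Suc r) = (i - r) * (i choose r)"
proof (cases i)
  case 0 then show ?thesis by simp
next
  case (Suc n)
  have "Suc r * (i choose Suc r) = Suc n * (n choose r)" using Suc Suc_times_binomial by simp
  also have "\<dots> = (Suc n - r) * (Suc n choose r)" using binomial_absorb_comp[of "Suc n" r] by simp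
  finally show ?thesis using Suc by simp
qed

lemma E_id:
  fixes a b c :: "'a::field_char_0"
  shows "(of_nat i - of_nat r + 1) * (racah_delta a b c d - racah_theta a d r - racah_theta b d r - racah_theta c d i)
    - of_nat r * (of_nat d - of_nat r + 1) * (a + b + c + of_nat d / 2 + 1 - of_nat r + 1)
    + (of_nat i + 1) * gC a b c d i
    + (of_nat i - of_nat r + 1) * (of_nat i - of_nat r) * (a + b - c + of_nat d / 2 - of_nat r) = 0"
  unfolding racah_delta_def racah_theta_def gC_def by (simp add: field_simps)

lemma core_id:
  fixes a b c :: "'a::field_char_0"
  shows "(racah_delta a b c d - racah_theta a d r - racah_theta b d r - racah_theta c d i) * pC a b c d r i
    - (if 0 < r then pC a b c d (r - 1) i else 0) - racah_phi a b c d (Suc r) * pC a b c d (Suc r) i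
    + pC a b c d r (Suc i) = 0"
    (is "?K * _ - ?F - _ + _ = 0")
proof -
  let ?g = "gC a b c d" and ?p = "pC a b c d"
  consider (gt) "Suc i < r" | (eq1) "r = Suc i" | (eq) "r = i" | (lt) "r < i" by linarith
  then show ?thesis
  proof cases
    case gt
    then show ?thesis by (auto simp: pC_def binomial_eq_0)
  next
    case eq1
    then show ?thesis by (simp add: pC_def binomial_eq_0)
  next
    case eq
    have p1: "?p i i = 1" by (simp add: pC_def)
    have p2: "?p (Suc i) i = 0" by (simp add: pC_def)
    have p3: "?p i (Suc i) = (of_nat i + 1) * ?g i" by (simp add: pC_def)
    have p4: "(if 0 < i then ?p (i - 1) i else 0) = of_nat i * (of_nat d - of_nat i + 1) * (a + b + c + of_nat d / 2 + 1 - of_nat i + 1)"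
    proof (cases i)
      case 0 then show ?thesis by simp
    next
      case (Suc m)
      then show ?thesis by (simp add: pC_def gC_def field_simps)
    qed
    show ?thesis using E_id[of i i a b c d] unfolding eq p1 p2 p3 p4 by simp
  next
    case lt
    define X where "X = (of_nat (i choose r) :: 'a)"
    define G where "G = (\<Prod>k = Suc r..<i. ?g k)"
    define R where "R = (of_nat r :: 'a)"
    define I where "I = (of_nat i :: 'a)"
    have IR: "(of_nat (i - r) :: 'a) = I - R" using lt unfolding I_def R_def by (simp add: of_nat_diff)
    have q1: "?p r i = X * ?g r * G"
      unfolding pC_def X_def G_def using lt by (simp add: prod.atLeast_Suc_lessThan)
    have q2: "?p r (Suc i) = of_nat (Suc i choose r) * (?g r * G * ?g i)"
      unfolding pC_def G_def using lt by (simp add: prod.atLeast_Suc_lessThan prod.atLeastLessThan_Suc)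
    have q3: "?p (Suc r) i = of_nat (i choose Suc r) * G" unfolding pC_def G_def by simp
    have b1: "(R + 1) * of_nat (i choose Suc r) = (I - R) * X"
    proof -
      have "(of_nat (Suc r * (i choose Suc r)) :: 'a) = of_nat ((i - r) * (i choose r))" by (simp only: bin1)
      then show ?thesis unfolding X_def R_def I_def using lt by (simp add: of_nat_diff algebra_simps)
    qed
    have b3: "(I - R + 1) * of_nat (Suc i choose r) = (I + 1) * X"
    proof -
      have e1: "(of_nat (Suc i - r) :: 'a) * of_nat (Suc i choose r) = of_nat (Suc i) * of_nat (i choose r)"
        using arg_cong[OF binomial_absorb_comp[of "Suc i" r], of "of_nat :: nat \<Rightarrow> 'a"]
        by (simp only: of_nat_mult diff_Suc_1)
      have e2: "(of_nat (Suc i - r) :: 'a) = I - R + 1" using lt unfolding I_def R_def by (simp add: of_nat_diff)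
      have e3: "(of_nat (Suc i) :: 'a) = I + 1" unfolding I_def by simp
      from e1 show ?thesis unfolding e2 e3 X_def .
    qed
    have b2: "(R + 1) * (I - R + 1) * ?F = (R + 1) * (R * X * (of_nat d - R + 1) * (a + b + c + of_nat d / 2 + 1 - R + 1) * ?g r * G)"
    proof (cases r)
      case 0 then show ?thesis unfolding R_def by simp
    next
      case (Suc m)
      have pm: "?p m i = of_nat (i choose m) * (?g m * (?g (Suc m) * G))"
        unfolding pC_def G_def using lt Suc by (simp add: prod.atLeast_Suc_lessThan)
      have bb: "(I - R + 1) * of_nat (i choose m) = R * X"
      proof -
        have e1: "(of_nat (Suc m) :: 'a) * of_nat (i choose Suc m) = of_nat (i - m) * of_nat (i choose m)"
          using arg_cong[OF bin1[of m i], of "of_nat :: nat \<Rightarrow> 'a"] by (simp only: of_nat_mult)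
        have e2: "(of_nat (i - m) :: 'a) = I - R + 1" using lt Suc unfolding I_def R_def by (simp add: of_nat_diff)
        have e3: "(of_nat (Suc m) :: 'a) = R" unfolding R_def Suc ..
        from e1[symmetric] show ?thesis unfolding e2 e3 X_def Suc .
      qed
      have gm: "?g m = (of_nat d - R + 1) * (a + b + c + of_nat d / 2 + 1 - R + 1)"
        unfolding gC_def R_def Suc by (simp add: algebra_simps)
      have "(R + 1) * (I - R + 1) * ?F = (R + 1) * (((I - R + 1) * of_nat (i choose m)) * (?g m * (?g r * G)))"
        using Suc pm by (simp add: algebra_simps)
      also have "\<dots> = (R + 1) * (R * X * (?g m * (?g r * G)))" unfolding bb ..
      also have "\<dots> = (R + 1) * (R * X * (of_nat d - R + 1) * (a + b + c + of_nat d / 2 + 1 - R + 1) * ?g r * G)"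
        by (simp only: gm mult.assoc)
      finally show ?thesis .
    qed
    have phi: "racah_phi a b c d (Suc r) = - (R + 1) * ?g r * (a + b - c + of_nat d / 2 - R)"
      unfolding racah_phi_def gC_def R_def by (simp add: field_simps)
    define W where "W = a + b - c + of_nat d / 2 - R"
    define V where "V = (of_nat d - R + 1) * (a + b + c + of_nat d / 2 + 1 - R + 1)"
    have phi': "racah_phi a b c d (Suc r) = - (R + 1) * ?g r * W" using phi unfolding W_def .
    have b2': "(R + 1) * (I - R + 1) * ?F = (R + 1) * (R * X * V * ?g r * G)"
      using b2 unfolding V_def by (simp only: mult.assoc)
    have "(R + 1) * (I - R + 1) * (?K * ?p r i - ?F - racah_phi a b c d (Suc r) * ?p (Suc r) i + ?p r (Suc i))
       = (R + 1) * (I - R + 1) * ?K * (X * ?g r * G) - (R + 1) * (I - R + 1) * ?F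
         + (I - R + 1) * (R + 1) * ?g r * W * ((R + 1) * of_nat (i choose Suc r)) * G
         + (R + 1) * ?g r * G * ?g i * ((I - R + 1) * of_nat (Suc i choose r))"
      unfolding q1 q2 q3 phi' by (simp add: algebra_simps)
    also have "\<dots> = (R + 1) * X * ?g r * G * ((I - R + 1) * ?K
        - R * V + (I + 1) * ?g i + (I - R + 1) * (I - R) * W)"
      unfolding b1 b2' b3 by (simp add: algebra_simps)
    also have "\<dots> = 0" using E_id[of i r a b c d] unfolding R_def I_def V_def W_def by (simp add: mult.assoc)
    finally have z: "(R + 1) * (I - R + 1) * (?K * ?p r i - ?F - racah_phi a b c d (Suc r) * ?p (Suc r) i + ?p r (Suc i)) = 0" .
    have "R + 1 \<noteq> 0" unfolding R_def by (metis of_nat_Suc of_nat_eq_0_iff add.commute nat.distinct(1))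
    moreover have "I - R + 1 \<noteq> 0" using IR[symmetric] by (metis of_nat_Suc of_nat_eq_0_iff add.commute nat.distinct(1))
    ultimately show ?thesis using z by simp
  qed
qed



definition LcM :: "'a::field \<Rightarrow> nat \<Rightarrow> 'a mat" where
  "LcM c d = mat (Suc d) (Suc d) (\<lambda>(i,j). if i = j then racah_theta c d j else if i = Suc j then -1 else 0)"

definition PcM :: "'a::field \<Rightarrow> 'a \<Rightarrow> 'a \<Rightarrow> nat \<Rightarrow> 'a mat" where
  "PcM a b c d = mat (Suc d) (Suc d) (\<lambda>(j,i). pC a b c d j i)"

lemma C_entry:
  assumes "r < Suc d" "k < Suc d"
  shows "racah_C a b c d $$ (r,k) = (if r = k then racah_delta a b c d - racah_theta a d k - racah_theta b d k
     else if r = Suc k then -1 else if Suc r = k then - racah_phi a b c d k else 0)"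
  using assms unfolding racah_C_def racah_A_def racah_B_def by auto

lemma phi_Suc_d: "racah_phi a b c d (Suc d) = 0"
  unfolding racah_phi_def by simp

lemma pC_Suc_d: "r \<le> d \<Longrightarrow> pC a b c d r (Suc d) = 0"
  unfolding pC_def by (subst prod_zero[of "{r..<Suc d}" _]) (auto intro!: bexI[of _ d] simp: gC_def)

lemma CP_entry:
  fixes a b c :: "'a::field_char_0"
  assumes r: "r < Suc d" and i: "i < Suc d"
  shows "(racah_C a b c d * PcM a b c d) $$ (r,i) =
    (racah_delta a b c d - racah_theta a d r - racah_theta b d r) * pC a b c d r i
    - (if 0 < r then pC a b c d (r - 1) i else 0) - racah_phi a b c d (Suc r) * pC a b c d (Suc r) i"
proof -
  let ?f = "\<lambda>k. racah_C a b c d $$ (r,k) * pC a b c d k i"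
  have "(racah_C a b c d * PcM a b c d) $$ (r,i) = (\<Sum>k<Suc d. ?f k)"
    using r i by (simp add: scalar_prod_def atLeast0LessThan racah_C_def racah_A_def racah_B_def PcM_def)
  also have "\<dots> = ?f r + (if 0 < r then ?f (r - 1) else 0) + (if Suc r < Suc d then ?f (Suc r) else 0)"
    by (rule sum_tri[OF r]) (use r in \<open>auto simp: C_entry\<close>)
  also have "\<dots> = (racah_delta a b c d - racah_theta a d r - racah_theta b d r) * pC a b c d r i
    - (if 0 < r then pC a b c d (r - 1) i else 0) - racah_phi a b c d (Suc r) * pC a b c d (Suc r) i"
  proof -
    have 1: "?f r = (racah_delta a b c d - racah_theta a d r - racah_theta b d r) * pC a b c d r i"
      using r by (simp add: C_entry)
    have 2: "(if 0 < r then ?f (r - 1) else 0) = - (if 0 < r then pC a b c d (r - 1) i else 0)"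
      using r by (cases r) (auto simp: C_entry)
    have 3: "(if Suc r < Suc d then ?f (Suc r) else 0) = - racah_phi a b c d (Suc r) * pC a b c d (Suc r) i"
    proof (cases "Suc r < Suc d")
      case True then show ?thesis by (simp add: C_entry)
    next
      case False
      then have "r = d" using r by simp
      then show ?thesis by (simp add: phi_Suc_d)
    qed
    show ?thesis unfolding 1 2 3 by simp
  qed
  finally show ?thesis .
qed

lemma PL_entry:
  fixes a b c :: "'a::field_char_0"
  assumes r: "r < Suc d" and i: "i < Suc d"
  shows "(PcM a b c d * LcM c d) $$ (r,i) = pC a b c d r i * racah_theta c d i - pC a b c d r (Suc i)"
proof -
  let ?f = "\<lambda>k. pC a b c d r k * LcM c d $$ (k,i)"
  have L: "\<And>k. k < Suc d \<Longrightarrow> LcM c d $$ (k,i) = (if k = i then racah_theta c d i else if k = Suc i then -1 else 0)"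
    using i unfolding LcM_def by auto
  have "(PcM a b c d * LcM c d) $$ (r,i) = (\<Sum>k<Suc d. ?f k)"
    using r i by (simp add: scalar_prod_def atLeast0LessThan LcM_def PcM_def)
  also have "\<dots> = ?f i + (if 0 < i then ?f (i - 1) else 0) + (if Suc i < Suc d then ?f (Suc i) else 0)"
    by (rule sum_tri[OF i]) (use i in \<open>auto simp: L\<close>)
  also have "\<dots> = pC a b c d r i * racah_theta c d i - pC a b c d r (Suc i)"
  proof -
    have 1: "?f i = pC a b c d r i * racah_theta c d i" using i by (simp add: L)
    have 2: "(if 0 < i then ?f (i - 1) else 0) = 0" using i by (auto simp: L)
    have 3: "(if Suc i < Suc d then ?f (Suc i) else 0) = - pC a b c d r (Suc i)"
    proof (cases "Suc i < Suc d")
      case True then show ?thesis by (simp add: L)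
    next
      case False
      then have "i = d" using i by simp
      then show ?thesis using pC_Suc_d[of r d a b c] r by simp
    qed
    show ?thesis unfolding 1 2 3 by simp
  qed
  finally show ?thesis .
qed

lemma C_similar:
  fixes a b c :: "'a::field_char_0"
  shows "similar_mat (racah_C a b c d) (LcM c d)"
proof (rule similar_by_intertwine)
  show C: "racah_C a b c d \<in> carrier_mat (Suc d) (Suc d)" unfolding racah_C_def racah_A_def racah_B_def by auto
  show "LcM c d \<in> carrier_mat (Suc d) (Suc d)" unfolding LcM_def by auto
  show P: "PcM a b c d \<in> carrier_mat (Suc d) (Suc d)" unfolding PcM_def by auto
  have "det (PcM a b c d) = prod_list (diag_mat (PcM a b c d))"
    by (rule det_upper_triangular[OF _ P]) (auto simp: upper_triangular_def PcM_def pC_def)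
  also have "\<dots> = 1"
    by (rule prod_list_all1) (auto simp: diag_mat_def PcM_def pC_def)
  finally show "det (PcM a b c d) \<noteq> 0" by simp
  show "racah_C a b c d * PcM a b c d = PcM a b c d * LcM c d"
  proof (rule eq_matI)
    fix r i assume "r < dim_row (PcM a b c d * LcM c d)" "i < dim_col (PcM a b c d * LcM c d)"
    then have r: "r < Suc d" and i: "i < Suc d" by (auto simp: PcM_def LcM_def)
    show "(racah_C a b c d * PcM a b c d) $$ (r,i) = (PcM a b c d * LcM c d) $$ (r,i)"
      unfolding CP_entry[OF r i] PL_entry[OF r i] using core_id[of a b c d r i] by (simp add: algebra_simps)
  qed (auto simp: PcM_def LcM_def racah_C_def racah_A_def racah_B_def)
qed

lemma LcM_lbidiag: "lbidiag (Suc d) (LcM c d)"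
  unfolding lbidiag_def LcM_def by auto

lemma LcM_diag: "i < Suc d \<Longrightarrow> LcM c d $$ (i,i) = racah_theta c d i"
  unfolding LcM_def by auto



theorem theorem6p6:
  fixes a b c :: "'a::field_char_0" and d :: nat
  assumes "alg_closed_field TYPE('a)"
    and "\<forall>x \<in> {a + b + c + 1, - a + b + c, a - b + c, a + b - c}.
           x \<notin> {of_nat d / 2 - of_nat i | i. i \<in> {1..d}}"
  shows "(diagonalizable_mat (racah_A a b c d) \<longleftrightarrow>
            a \<notin> {(of_nat i - of_nat d - 1) / 2 | i. i \<in> {1..2*d-1}})
       \<and> (diagonalizable_mat (racah_B a b c d) \<longleftrightarrow>
            b \<notin> {(of_nat i - of_nat d - 1) / 2 | i. i \<in> {1..2*d-1}})
       \<and> (diagonalizable_mat (racah_C a b c d) \<longleftrightarrow>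
            c \<notin> {(of_nat i - of_nat d - 1) / 2 | i. i \<in> {1..2*d-1}})"
proof (intro conjI)
  have "diagonalizable_mat (racah_A a b c d) \<longleftrightarrow> inj_on (\<lambda>i. racah_A a b c d $$ (i,i)) {..<Suc d}"
    by (rule lbidiag_diagonalizable_iff[OF racah_A_lbidiag])
  also have "\<dots> \<longleftrightarrow> inj_on (\<lambda>i. racah_theta a d i) {..<Suc d}"
    by (rule inj_on_cong) (simp add: racah_A_diag)
  finally show "diagonalizable_mat (racah_A a b c d) \<longleftrightarrow>
            a \<notin> {(of_nat i - of_nat d - 1) / 2 | i. i \<in> {1..2*d-1}}" using inj_theta_iff by blast
next
  have "diagonalizable_mat (racah_B a b c d) \<longleftrightarrow> diagonalizable_mat (transpose_mat (racah_B a b c d))"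
    by (simp add: diagonalizable_transpose_iff)
  also have "\<dots> \<longleftrightarrow> inj_on (\<lambda>i. transpose_mat (racah_B a b c d) $$ (i,i)) {..<Suc d}"
    by (rule lbidiag_diagonalizable_iff[OF racah_B_lbidiag[OF assms(2)]])
  also have "\<dots> \<longleftrightarrow> inj_on (\<lambda>i. racah_theta b d i) {..<Suc d}"
    by (rule inj_on_cong) (simp add: racah_B_diag)
  finally show "diagonalizable_mat (racah_B a b c d) \<longleftrightarrow>
            b \<notin> {(of_nat i - of_nat d - 1) / 2 | i. i \<in> {1..2*d-1}}" using inj_theta_iff by blast
next
  have "diagonalizable_mat (racah_C a b c d) \<longleftrightarrow> diagonalizable_mat (LcM c d)"
    by (rule diagonalizable_similar[OF C_similar])
  also have "\<dots> \<longleftrightarrow> inj_on (\<lambda>i. LcM c d $$ (i,i)) {..<Suc d}"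
    by (rule lbidiag_diagonalizable_iff[OF LcM_lbidiag])
  also have "\<dots> \<longleftrightarrow> inj_on (\<lambda>i. racah_theta c d i) {..<Suc d}"
    by (rule inj_on_cong) (simp add: LcM_diag)
  finally show "diagonalizable_mat (racah_C a b c d) \<longleftrightarrow>
            c \<notin> {(of_nat i - of_nat d - 1) / 2 | i. i \<in> {1..2*d-1}}" using inj_theta_iff by blast
qed


end
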